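(* For every $\beta=(\beta_1,\dots,\beta_k)\in\mathbb P^k$ with $k\ge 1$, and for $t\ge0$ and $\mathrm{Re}(z)<0$, $$\phi\tbinom{0^k}{\beta}=\sum_{n=0}^\infty\Bigg(\sum_{(s_1,\dots,s_k)\in \mathrm{WC}_k(n)}\Big(\sum_{i=0}^{s_1}\frac{b_{s_1-i}}{i!(s_1-i)!}t^i\Big)\frac{b_{s_2}\cdots b_{s_k}}{s_2!\cdots s_k!}(\beta_1+\cdots+\beta_k)^{s_1-1}(\beta_2+\cdots+\beta_k)^{s_2-1}\cdots\beta_k^{s_k-1}\Bigg)z^{n-k}.$$
   Context: $\mathbb P$ denotes the positive integers. For $\beta\in\mathbb P^k$, real $t\ge0$ and complex $z$ with $\mathrm{Re}(z)<0$, define $$\phi\tbinom{0^k}{\beta}=\sum_{0<i_1<\cdots<i_k}e^{(i_1+t)\beta_1z}\cdots e^{(i_k+t)\beta_kz}.$$ This series is absolutely convergent and is identified with its Laurent expansion in $z$. $\mathrm{WC}_k(n)$ denotes the set of sequences $(s_1,\dots,s_k)$ of nonnegative integers with $s_1+\dots+s_k=n$. The numbers $b_s$ are defined by $b_0=-1$, $b_1=-\tfrac12$ and $b_s=-B_s$ for $s\ge2$. Here $B_s$ are the Bernoulli numbers given by $z/(e^z-1)=\sum_{s\ge0}B_sz^s/s!$. Equivalently, $e^z/(1-e^z)=\sum_{s\ge0}\frac{b_s}{s!}z^{s-1}$. *)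

theory Defs
  imports "HOL-Analysis.Analysis" "HOL-Computational_Algebra.Formal_Power_Series"
begin

definition bernoulli_num :: "nat \<Rightarrow> real" where
  "bernoulli_num s = fps_nth (fps_X / (fps_exp 1 - 1)) s * fact s"

definition bnum :: "nat \<Rightarrow> real" where
  "bnum s = (if s = 0 then -1 else if s = 1 then -1/2 else - bernoulli_num s)"

definition incr_tuples :: "nat \<Rightarrow> nat list set" where
  "incr_tuples k = {i. length i = k \<and> sorted_wrt (<) i \<and> (\<forall>x\<in>set i. 0 < x)}"

definition phi :: "nat list \<Rightarrow> real \<Rightarrow> complex \<Rightarrow> complex" where
  "phi \<beta> t z = (\<Sum>\<^sub>\<infinity>i\<in>incr_tuples (length \<beta>).
      \<Prod>j<length \<beta>. exp (complex_of_real ((real (i ! j) + t) * real (\<beta> ! j)) * z))"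

definition WC :: "nat \<Rightarrow> nat \<Rightarrow> nat list set" where
  "WC k n = {s. length s = k \<and> sum_list s = n}"

text \<open>The coefficient of z^(n-k) in the Laurent expansion.\<close>
definition coef :: "nat list \<Rightarrow> real \<Rightarrow> nat \<Rightarrow> real" where
  "coef \<beta> t n = (let k = length \<beta> in
     \<Sum>s\<in>WC k n.
       (\<Sum>i=0..s!0. bnum (s!0 - i) / (fact i * fact (s!0 - i)) * t ^ i)
       * (\<Prod>j\<in>{1..<k}. bnum (s!j) / fact (s!j))
       * (\<Prod>j<k. (real (\<Sum>l\<in>{j..<k}. \<beta> ! l)) powi (int (s!j) - 1)))"

end

theory Submission
  imports Defs
begin


definition Gr :: "real fps" where "Gr = fps_X / (fps_exp 1 - 1)"

lemma sub_E1: "subdegree (fps_exp (1::'a::field_char_0) - 1) = 1"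
  by (rule subdegreeI) auto

lemma E1_nz: "fps_exp (1::'a::field_char_0) - 1 \<noteq> 0"
proof
  assume "fps_exp (1::'a) - 1 = 0"
  hence "fps_nth (fps_exp (1::'a) - 1) 1 = 0" by simp
  thus False by simp
qed

lemma Gr_mult: "Gr * (fps_exp 1 - 1) = fps_X"
  unfolding Gr_def by (rule fps_times_divide_eq) (use sub_E1[where 'a=real] E1_nz[where 'a=real] in simp_all)

lemma Gr0: "fps_nth Gr 0 = 1" and Gr1: "fps_nth Gr 1 = - 1/2"
proof -
  have a: "fps_nth (Gr * (fps_exp 1 - 1)) 1 = 1" by (simp add: Gr_mult)
  have b: "fps_nth (Gr * (fps_exp 1 - 1)) 2 = 0" by (simp add: Gr_mult)
  from a show g0: "fps_nth Gr 0 = 1" by (simp add: fps_mult_nth)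
  from b g0 show "fps_nth Gr 1 = - 1/2" by (simp add: fps_mult_nth numeral_2_eq_2)
qed

definition Qr :: "real fps" where "Qr = - Gr - fps_X"

lemma Qr_nth: "fps_nth Qr s = bnum s / fact s"
  using Gr0 Gr1 by (auto simp: Qr_def bnum_def bernoulli_num_def Gr_def[symmetric])

lemma Qr_mult: "Qr * (1 - fps_exp 1) = fps_X * fps_exp 1"
proof -
  have "Qr * (1 - fps_exp 1) = Gr * (fps_exp 1 - 1) - fps_X + fps_X * fps_exp 1"
    by (simp add: Qr_def algebra_simps)
  thus ?thesis by (simp add: Gr_mult)
qed

definition cmap :: "real fps \<Rightarrow> complex fps" where
  "cmap f = Abs_fps (\<lambda>n. of_real (fps_nth f n))"

lemma cmap_nth[simp]: "fps_nth (cmap f) n = of_real (fps_nth f n)"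
  by (simp add: cmap_def)

lemma cmap_mult: "cmap (f * g) = cmap f * cmap g"
  by (rule fps_ext) (simp add: fps_mult_nth)

lemma cmap_1mE: "cmap (1 - fps_exp 1) = 1 - fps_exp 1"
  by (rule fps_ext) simp

lemma cmap_XE: "cmap (fps_X * fps_exp 1) = fps_X * fps_exp 1"
  by (rule fps_ext) (auto simp: fps_mult_nth fps_X_nth intro!: sum.cong)

definition Qc :: "complex fps" where "Qc = Abs_fps (\<lambda>s. of_real (bnum s / fact s))"

lemma Qc_nth: "fps_nth Qc s = of_real (bnum s / fact s)"
  by (simp add: Qc_def)

lemma Qc_cmap: "Qc = cmap Qr"
  by (rule fps_ext) (simp add: Qc_nth Qr_nth)

lemma Qc_mult: "Qc * (1 - fps_exp 1) = fps_X * fps_exp 1"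
  by (metis Qc_cmap cmap_mult cmap_1mE cmap_XE Qr_mult)

lemma Qc_div: "Qc = (fps_X * fps_exp 1) / (1 - fps_exp (1::complex))"
proof -
  have nz: "1 - fps_exp (1::complex) \<noteq> 0"
    using E1_nz[where 'a=complex] by (metis eq_iff_diff_eq_0)
  show ?thesis using fps_divide_times_eq[OF nz, of Qc] Qc_mult by simp
qed

lemma Qc_exp: "\<exists>r0>0. \<forall>w. norm w < r0 \<longrightarrow> ereal (norm w) < fps_conv_radius Qc \<and>
    (w \<noteq> 0 \<longrightarrow> eval_fps Qc w = w * exp w / (1 - exp w))"
proof -
  have sd1: "subdegree (1 - fps_exp (1::complex)) = 1"
    by (rule subdegreeI) auto
  have sd2: "subdegree (fps_X * fps_exp (1::complex)) = 1"
    by (rule subdegreeI) (auto simp: fps_mult_nth)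
  have nz: "1 - fps_exp (1::complex) \<noteq> 0"
    using E1_nz[where 'a=complex] by (metis eq_iff_diff_eq_0)
  have "(\<lambda>x. if x = 0 then fps_nth (fps_X * fps_exp 1) 1 / fps_nth (1 - fps_exp (1::complex)) 1
      else (x * exp x) / (1 - exp x)) has_fps_expansion ((fps_X * fps_exp 1) / (1 - fps_exp 1))"
    by (rule has_fps_expansion_divide[OF has_fps_expansion_mult[OF has_fps_expansion_fps_X has_fps_expansion_exp1]
         has_fps_expansion_diff[OF has_fps_expansion_1 has_fps_expansion_exp1]])
       (use sd1 sd2 nz in auto)
  hence H: "fps_conv_radius Qc > 0" "eventually (\<lambda>x. eval_fps Qc x = (if x = 0 then fps_nth (fps_X * fps_exp 1) 1 / fps_nth (1 - fps_exp (1::complex)) 1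
      else (x * exp x) / (1 - exp x))) (nhds 0)"
    unfolding Qc_div[symmetric] has_fps_expansion_def by auto
  from H(2) obtain d where d: "d > 0" "\<And>x. dist x 0 < d \<Longrightarrow> eval_fps Qc x = (if x = 0 then fps_nth (fps_X * fps_exp 1) 1 / fps_nth (1 - fps_exp (1::complex)) 1
      else (x * exp x) / (1 - exp x))"
    unfolding eventually_nhds_metric by blast
  from H(1) obtain r1 where r1: "0 < ereal r1" "ereal r1 < fps_conv_radius Qc"
    using ereal_dense2 zero_ereal_def by metis
  show ?thesis
  proof (intro exI[of _ "min d r1"] conjI allI impI)
    show "min d r1 > 0" using d r1 by auto
  next
    fix w :: complex assume w: "norm w < min d r1"
    show "ereal (norm w) < fps_conv_radius Qc" using w r1 by (meson ereal_less_eq(3) le_less_trans min.cobounded2 less_imp_le order.strict_trans1)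
    assume "w \<noteq> 0" thus "eval_fps Qc w = w * exp w / (1 - exp w)" using d(2)[of w] w by auto
  qed
qed



definition cv :: "complex fps \<Rightarrow> complex \<Rightarrow> complex \<Rightarrow> bool" where
  "cv f z v \<longleftrightarrow> summable (\<lambda>n. norm (fps_nth f n * z ^ n)) \<and> (\<lambda>n. fps_nth f n * z ^ n) sums v"

lemma fps_mult_nth_pow:
  fixes f g :: "complex fps"
  shows   "fps_nth (f * g) k * z ^ k = (\<Sum>i\<le>k. (fps_nth f i * z ^ i) * (fps_nth g (k - i) * z ^ (k - i)))"
proof -
  have "fps_nth (f * g) k * z ^ k = (\<Sum>i\<le>k. fps_nth f i * fps_nth g (k - i) * z ^ k)"
    unfolding fps_mult_nth atLeast0AtMost by (rule sum_distrib_right)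
  also have "\<dots> = (\<Sum>i\<le>k. (fps_nth f i * z ^ i) * (fps_nth g (k - i) * z ^ (k - i)))"
    by (intro sum.cong refl) (simp add: power_add[symmetric] algebra_simps)
  finally show ?thesis .
qed

lemma cv_mult:
  assumes "cv f z v" "cv g z w"
  shows "cv (f * g) z (v * w)"
proof -
  define a where "a n = fps_nth f n * z ^ n" for n
  define b where "b n = fps_nth g n * z ^ n" for n
  have sa: "summable (\<lambda>n. norm (a n))" and sb: "summable (\<lambda>n. norm (b n))"
    and va: "suminf a = v" and vb: "suminf b = w"
    using assms unfolding cv_def a_def[abs_def] b_def[abs_def] by (auto simp: sums_iff)
  have e: "fps_nth (f * g) k * z ^ k = (\<Sum>i\<le>k. a i * b (k - i))" for k
    unfolding a_def b_def by (rule fps_mult_nth_pow)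
  have "(\<lambda>k. \<Sum>i\<le>k. norm (a i) * norm (b (k - i))) sums ((\<Sum>k. norm (a k)) * (\<Sum>k. norm (b k)))"
    using Cauchy_product_sums[of "\<lambda>n. norm (a n)" "\<lambda>n. norm (b n)"] sa sb by simp
  hence s1: "summable (\<lambda>k. \<Sum>i\<le>k. norm (a i) * norm (b (k - i)))" by (rule sums_summable)
  have "summable (\<lambda>k. norm (fps_nth (f * g) k * z ^ k))"
  proof (rule summable_comparison_test'[OF s1])
    fix k :: nat
    have "norm (\<Sum>i\<le>k. a i * b (k - i)) \<le> (\<Sum>i\<le>k. norm (a i * b (k - i)))" by (rule norm_sum)
    thus "norm (norm (fps_nth (f * g) k * z ^ k)) \<le> (\<Sum>i\<le>k. norm (a i) * norm (b (k - i)))"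
      by (simp add: e norm_mult)
  qed
  moreover have "(\<lambda>k. fps_nth (f * g) k * z ^ k) sums (v * w)"
    unfolding e using Cauchy_product_sums[OF sa sb] va vb by simp
  ultimately show ?thesis by (simp add: cv_def)
qed

lemma cv_one: "cv 1 z 1"
proof -
  have e: "(\<lambda>n. fps_nth 1 n * z ^ n) = (\<lambda>n. if n = 0 then 1 else 0)"
    by (auto simp: fun_eq_iff)
  have e2: "(\<lambda>n. norm (fps_nth (1::complex fps) n * z ^ n)) = (\<lambda>n. if n = 0 then 1 else 0)"
    by (auto simp: fun_eq_iff)
  have "summable (\<lambda>n. norm (fps_nth (1::complex fps) n * z ^ n))"
    unfolding e2 using sums_single[of 0 "\<lambda>_. 1::real"] sums_summable by simp
  moreover have "(\<lambda>n. fps_nth 1 n * z ^ n) sums 1"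
    unfolding e using sums_single[of 0 "\<lambda>_. 1::complex"] by simp
  ultimately show ?thesis by (simp add: cv_def)
qed

lemma cv_prod:
  fixes k :: nat
  assumes "\<And>j. j < k \<Longrightarrow> cv (F j) z (v j)"
  shows "cv (\<Prod>j<k. F j) z (\<Prod>j<k. v j)"
  using assms
proof (induction k)
  case 0
  then show ?case by (simp add: cv_one)
next
  case (Suc k)
  then show ?case by (simp add: cv_mult)
qed



lemma finite_WC: "finite (WC k n)"
proof (rule finite_subset)
  show "WC k n \<subseteq> {xs. set xs \<subseteq> {..n} \<and> length xs = k}"
    by (auto simp: WC_def member_le_sum_list)
  show "finite {xs. set xs \<subseteq> {..n} \<and> length xs = k}"
    by (rule finite_lists_length_eq) simp
qed

lemma WC_0: "WC 0 n = (if n = 0 then {[]} else {})"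
  by (auto simp: WC_def)

lemma sum_WC_Suc:
  "(\<Sum>t\<in>WC (Suc k) n. h t) = (\<Sum>i=0..n. \<Sum>s\<in>WC k (n - i). h (i # s))"
proof -
  have "(\<Sum>i=0..n. \<Sum>s\<in>WC k (n - i). h (i # s)) = (\<Sum>p\<in>Sigma {0..n} (\<lambda>i. WC k (n - i)). h (fst p # snd p))"
    using sum.Sigma[of "{0..n}" "\<lambda>i. WC k (n-i)" "\<lambda>i s. h (i#s)"] by (simp add: finite_WC split_def)
  also have "\<dots> = (\<Sum>t\<in>WC (Suc k) n. h t)"
  proof (rule sum.reindex_bij_witness[where i = "\<lambda>t. (hd t, tl t)" and j = "\<lambda>p. fst p # snd p"])
    fix p assume "p \<in> Sigma {0..n} (\<lambda>i. WC k (n - i))"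
    thus "fst p # snd p \<in> WC (Suc k) n" by (auto simp: WC_def)
  next
    fix t assume t: "t \<in> WC (Suc k) n"
    then obtain a s where "t = a # s" by (cases t) (auto simp: WC_def)
    with t show "(hd t, tl t) \<in> Sigma {0..n} (\<lambda>i. WC k (n - i))" "fst (hd t, tl t) # snd (hd t, tl t) = t"
      by (auto simp: WC_def)
  qed auto
  finally show ?thesis ..
qed

lemma fps_nth_prod_WC:
  fixes F :: "nat \<Rightarrow> 'a::comm_ring_1 fps"
  shows "fps_nth (\<Prod>j<k. F j) n = (\<Sum>s\<in>WC k n. \<Prod>j<k. fps_nth (F j) (s ! j))"
proof (induction k arbitrary: F n)
  case 0
  then show ?case by (simp add: WC_0)
next
  case (Suc k)
  have "fps_nth (\<Prod>j<Suc k. F j) n = fps_nth (F 0 * (\<Prod>j<k. F (Suc j))) n"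
    by (simp only: prod.lessThan_Suc_shift)
  also have "\<dots> = (\<Sum>i=0..n. fps_nth (F 0) i * (\<Sum>s\<in>WC k (n - i). \<Prod>j<k. fps_nth (F (Suc j)) (s ! j)))"
    by (simp add: fps_mult_nth Suc.IH)
  also have "\<dots> = (\<Sum>i=0..n. \<Sum>s\<in>WC k (n - i). \<Prod>j<Suc k. fps_nth (F j) ((i # s) ! j))"
    by (simp del: prod.lessThan_Suc add: sum_distrib_left prod.lessThan_Suc_shift)
  also have "\<dots> = (\<Sum>s\<in>WC (Suc k) n. \<Prod>j<Suc k. fps_nth (F j) (s ! j))"
    by (rule sum_WC_Suc[symmetric])
  finally show ?case .
qed



definition Lm :: "nat \<Rightarrow> (nat \<Rightarrow> nat) \<Rightarrow> nat list" where
  "Lm k m = map (\<lambda>j. \<Sum>l\<le>j. m l) [0..<k]"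

definition Dm :: "nat \<Rightarrow> nat list \<Rightarrow> nat \<Rightarrow> nat" where
  "Dm k i = (\<lambda>j. if j < k then (if j = 0 then i ! 0 else i ! j - i ! (j - 1)) else undefined)"

lemma strict_chain:
  fixes f :: "nat \<Rightarrow> nat"
  assumes "\<And>j. Suc j < k \<Longrightarrow> f j < f (Suc j)" "i < j" "j < k"
  shows "f i < f j"
  using assms(2,3)
proof (induction j)
  case 0 then show ?case by simp
next
  case (Suc j)
  show ?case
  proof (cases "i = j")
    case True then show ?thesis using assms(1) Suc by simp
  next
    case False
    hence "f i < f j" using Suc by simp
    also have "f j < f (Suc j)" using assms(1) Suc by simp
    finally show ?thesis .
  qed
qed

lemma Lm_nth: "j < k \<Longrightarrow> Lm k m ! j = (\<Sum>l\<le>j. m l)"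
  by (simp add: Lm_def)

lemma Lm_in: 
  assumes "m \<in> PiE {..<k} (\<lambda>_. {1::nat..})"
  shows "Lm k m \<in> incr_tuples k"
proof -
  have m1: "j < k \<Longrightarrow> m j \<ge> 1" for j using assms by (auto simp: PiE_def Pi_def)
  have "sorted_wrt (<) (Lm k m)"
    unfolding sorted_wrt_iff_nth_less
  proof (intro allI impI)
    fix i j assume ij: "i < j" "j < length (Lm k m)"
    have "(\<lambda>j. \<Sum>l\<le>j. m l) i < (\<lambda>j. \<Sum>l\<le>j. m l) j"
    proof (rule strict_chain[where k=k and f="\<lambda>j. \<Sum>l\<le>j. m l"])
      fix j assume "Suc j < k"
      thus "(\<Sum>l\<le>j. m l) < (\<Sum>l\<le>Suc j. m l)" using m1[of "Suc j"] by simp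
    qed (use ij in \<open>auto simp: Lm_def\<close>)
    thus "Lm k m ! i < Lm k m ! j" using ij by (simp add: Lm_def)
  qed
  moreover have "\<forall>x\<in>set (Lm k m). 0 < x"
  proof
    fix x assume "x \<in> set (Lm k m)"
    then obtain j where j: "j < k" "x = (\<Sum>l\<le>j. m l)" by (auto simp: Lm_def)
    have "m j \<le> (\<Sum>l\<le>j. m l)" by (rule member_le_sum) auto
    with m1[OF j(1)] j show "0 < x" by simp
  qed
  ultimately show ?thesis by (simp add: incr_tuples_def Lm_def)
qed

lemma Dm_Lm:
  assumes "m \<in> PiE {..<k} (\<lambda>_. {1::nat..})"
  shows "Dm k (Lm k m) = m"
proof
  fix j
  show "Dm k (Lm k m) j = m j"
  proof (cases "j < k")
    case True
    show ?thesis
    proof (cases j)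
      case 0 then show ?thesis using True by (simp add: Dm_def Lm_nth)
    next
      case (Suc j')
      have "Lm k m ! j = Lm k m ! j' + m j" using True Suc by (simp add: Lm_nth)
      moreover have "Dm k (Lm k m) j = Lm k m ! j - Lm k m ! j'" using True Suc by (simp add: Dm_def)
      ultimately show ?thesis by simp
    qed
  next
    case False
    then show ?thesis using assms by (auto simp: Dm_def PiE_def extensional_def)
  qed
qed

lemma incr_props:
  assumes "i \<in> incr_tuples k"
  shows "length i = k" "\<And>a b. a < b \<Longrightarrow> b < k \<Longrightarrow> i ! a < i ! b" "\<And>a. a < k \<Longrightarrow> 0 < i ! a"
  using assms by (auto simp: incr_tuples_def sorted_wrt_iff_nth_less)

lemma Dm_in:
  assumes "i \<in> incr_tuples k"
  shows "Dm k i \<in> PiE {..<k} (\<lambda>_. {1::nat..})"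
proof -
  note P = incr_props[OF assms]
  have "Dm k i j \<ge> 1" if "j < k" for j
  proof (cases j)
    case 0 then show ?thesis using P(3)[of 0] that by (simp add: Dm_def)
  next
    case (Suc j')
    have "i ! j' < i ! j" using P(2)[of j' j] that Suc by simp
    then show ?thesis using that Suc by (simp add: Dm_def)
  qed
  thus ?thesis by (auto simp: PiE_def extensional_def Dm_def)
qed

lemma Lm_Dm:
  assumes "i \<in> incr_tuples k"
  shows "Lm k (Dm k i) = i"
proof -
  note P = incr_props[OF assms]
  have s: "(\<Sum>l\<le>j. Dm k i l) = i ! j" if "j < k" for j
    using that
  proof (induction j)
    case 0 then show ?case by (simp add: Dm_def)
  next
    case (Suc j)
    have "i ! j < i ! Suc j" using P(2)[of j "Suc j"] Suc by simp
    moreover have "Dm k i (Suc j) = i ! Suc j - i ! j" using Suc.prems by (simp add: Dm_def)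
    moreover have "(\<Sum>l\<le>j. Dm k i l) = i ! j" using Suc by simp
    ultimately show ?case by simp
  qed
  show ?thesis
    by (rule nth_equalityI) (use P(1) s in \<open>auto simp: Lm_def\<close>)
qed

lemma bij_Lm: "bij_betw (Lm k) (PiE {..<k} (\<lambda>_. {1::nat..})) (incr_tuples k)"
proof (rule bij_betw_byWitness[where f' = "Dm k"])
  show "\<forall>a\<in>PiE {..<k} (\<lambda>_. {1::nat..}). Dm k (Lm k a) = a" using Dm_Lm by blast
  show "\<forall>a\<in>incr_tuples k. Lm k (Dm k a) = a" using Lm_Dm by blast
  show "Lm k ` PiE {..<k} (\<lambda>_. {1::nat..}) \<subseteq> incr_tuples k" using Lm_in by blast
  show "Dm k ` incr_tuples k \<subseteq> PiE {..<k} (\<lambda>_. {1::nat..})" using Dm_in by blast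
qed



lemma sum_swap_nat:
  fixes m b :: "nat \<Rightarrow> nat"
  shows "(\<Sum>j<k. (\<Sum>l\<le>j. m l) * b j) = (\<Sum>l<k. m l * (\<Sum>j\<in>{l..<k}. b j))"
proof (induction k)
  case 0 then show ?case by simp
next
  case (Suc k)
  have A: "(\<Sum>l\<le>k. m l) = (\<Sum>l<k. m l) + m k" by (metis sum.lessThan_Suc lessThan_Suc_atMost)
  have L: "(\<Sum>j<Suc k. (\<Sum>l\<le>j. m l) * b j) = (\<Sum>j<k. (\<Sum>l\<le>j. m l) * b j) + ((\<Sum>l<k. m l) + m k) * b k"
    by (simp only: sum.lessThan_Suc A)
  have "(\<Sum>l<Suc k. m l * (\<Sum>j\<in>{l..<Suc k}. b j)) = (\<Sum>l<k. m l * (\<Sum>j\<in>{l..<Suc k}. b j)) + m k * b k"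
    by simp
  also have "(\<Sum>l<k. m l * (\<Sum>j\<in>{l..<Suc k}. b j)) = (\<Sum>l<k. m l * (\<Sum>j\<in>{l..<k}. b j) + m l * b k)"
    by (intro sum.cong refl) (simp add: sum.atLeastLessThan_Suc algebra_simps)
  finally have R: "(\<Sum>l<Suc k. m l * (\<Sum>j\<in>{l..<Suc k}. b j)) = (\<Sum>l<k. m l * (\<Sum>j\<in>{l..<k}. b j) + m l * b k) + m k * b k" .
  show ?case unfolding L R sum.distrib Suc.IH by (simp add: sum_distrib_right sum_distrib_left algebra_simps)
qed

lemma term_Lm:
  fixes \<beta> :: "nat list" and t :: real and z :: complex and m :: "nat \<Rightarrow> nat"
  defines "k \<equiv> length \<beta>"
  defines "Bs \<equiv> (\<lambda>l. real (\<Sum>j\<in>{l..<k}. \<beta> ! j))"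
  shows "(\<Prod>j<k. exp (complex_of_real ((real (Lm k m ! j) + t) * real (\<beta> ! j)) * z))
         = exp (complex_of_real (t * Bs 0) * z) * (\<Prod>l<k. exp (complex_of_real (Bs l) * z) ^ m l)"
proof -
  have e1: "(\<Sum>j<k. (real (Lm k m ! j) + t) * real (\<beta> ! j)) = t * Bs 0 + (\<Sum>l<k. real (m l) * Bs l)"
  proof -
    have "(\<Sum>j<k. (real (Lm k m ! j) + t) * real (\<beta> ! j))
        = t * (\<Sum>j<k. real (\<beta> ! j)) + real (\<Sum>j<k. (\<Sum>l\<le>j. m l) * \<beta> ! j)"
      by (simp add: Lm_nth algebra_simps sum.distrib sum_distrib_left)
    also have "(\<Sum>j<k. (\<Sum>l\<le>j. m l) * \<beta> ! j) = (\<Sum>l<k. m l * (\<Sum>j\<in>{l..<k}. \<beta> ! j))"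
      by (rule sum_swap_nat)
    finally show ?thesis by (simp add: Bs_def atLeast0LessThan)
  qed
  have "(\<Prod>j<k. exp (complex_of_real ((real (Lm k m ! j) + t) * real (\<beta> ! j)) * z))
      = exp (\<Sum>j<k. complex_of_real ((real (Lm k m ! j) + t) * real (\<beta> ! j)) * z)"
    by (simp add: exp_sum)
  also have "(\<Sum>j<k. complex_of_real ((real (Lm k m ! j) + t) * real (\<beta> ! j)) * z)
      = complex_of_real (\<Sum>j<k. (real (Lm k m ! j) + t) * real (\<beta> ! j)) * z"
    by (simp add: sum_distrib_right)
  also have "\<dots> = complex_of_real (t * Bs 0 + (\<Sum>l<k. real (m l) * Bs l)) * z"
    by (simp only: e1)
  also have "\<dots> = complex_of_real (t * Bs 0) * z + (\<Sum>l<k. of_nat (m l) * (complex_of_real (Bs l) * z))"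
    by (simp add: distrib_right sum_distrib_right mult.assoc)
  also have "exp \<dots> = exp (complex_of_real (t * Bs 0) * z) * (\<Prod>l<k. exp (complex_of_real (Bs l) * z) ^ m l)"
    by (simp add: exp_add exp_sum exp_of_nat_mult)
  finally show ?thesis .
qed

lemma phi_closed:
  fixes \<beta> :: "nat list" and t :: real and z :: complex
  defines "k \<equiv> length \<beta>"
  defines "Bs \<equiv> (\<lambda>l. real (\<Sum>j\<in>{l..<k}. \<beta> ! j))"
  assumes pos: "\<forall>b\<in>set \<beta>. 0 < b" and z: "Re z < 0"
  shows "phi \<beta> t z = exp (complex_of_real (t * Bs 0) * z) *
           (\<Prod>l<k. exp (complex_of_real (Bs l) * z) / (1 - exp (complex_of_real (Bs l) * z)))"
proof -
  define w where "w l = exp (complex_of_real (Bs l) * z)" for l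
  define c where "c = exp (complex_of_real (t * Bs 0) * z)"
  have Bpos: "Bs l > 0" if "l < k" for l
  proof -
    have "\<beta> ! l \<le> (\<Sum>j\<in>{l..<k}. \<beta> ! j)" by (rule member_le_sum) (use that in auto)
    moreover have "\<beta> ! l > 0" using pos that by (simp add: k_def)
    ultimately have "0 < (\<Sum>j\<in>{l..<k}. \<beta> ! j)" by linarith
    thus ?thesis unfolding Bs_def of_nat_0_less_iff .
  qed
  have nw: "norm (w l) < 1" if "l < k" for l
  proof -
    have "norm (w l) = exp (Bs l * Re z)" by (simp add: w_def)
    also have "\<dots> < 1" using Bpos[OF that] z by (simp add: mult_pos_neg)
    finally show ?thesis .
  qed
  have "phi \<beta> t z = infsum (\<lambda>i. \<Prod>j<k. exp (complex_of_real ((real (i ! j) + t) * real (\<beta> ! j)) * z)) (incr_tuples k)"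
    by (simp add: phi_def k_def)
  also have "\<dots> = infsum (\<lambda>m. \<Prod>j<k. exp (complex_of_real ((real (Lm k m ! j) + t) * real (\<beta> ! j)) * z))
                    (PiE {..<k} (\<lambda>_. {1::nat..}))"
    by (rule infsum_reindex_bij_betw[OF bij_Lm, symmetric])
  also have "\<dots> = infsum (\<lambda>m. c * (\<Prod>l<k. w l ^ m l)) (PiE {..<k} (\<lambda>_. {1::nat..}))"
    by (intro infsum_cong) (unfold c_def w_def Bs_def k_def, rule term_Lm)
  also have "\<dots> = c * infsum (\<lambda>m. \<Prod>l<k. w l ^ m l) (PiE {..<k} (\<lambda>_. {1::nat..}))"
    by (rule infsum_cmult_right')
  also have "infsum (\<lambda>m. \<Prod>l<k. w l ^ m l) (PiE {..<k} (\<lambda>_. {1::nat..})) = (\<Prod>l<k. infsum (\<lambda>n. w l ^ n) {1..})"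
  proof (rule infsum_prod_PiE_abs)
    fix l assume "l \<in> {..<k}"
    hence "norm (norm (w l)) < 1" using nw by simp
    from has_sum_geometric_from_1[OF this] show "(\<lambda>n. norm (w l ^ n)) summable_on {1..}"
      by (simp add: norm_power summable_on_def) blast
  qed simp
  also have "\<dots> = (\<Prod>l<k. w l / (1 - w l))"
    by (intro prod.cong refl infsumI has_sum_geometric_from_1) (use nw in auto)
  finally show ?thesis by (simp add: c_def w_def)
qed



definition Fq :: "real \<Rightarrow> complex fps" where
  "Fq B = Abs_fps (\<lambda>s. fps_nth Qc s * complex_of_real (B powi (int s - 1)))"

lemma Fq_nth: "fps_nth (Fq B) s = complex_of_real (bnum s / fact s * B powi (int s - 1))"
  by (simp add: Fq_def Qc_nth)

lemma powi_shift: "B \<noteq> 0 \<Longrightarrow> (B::real) powi (int s - 1) = B ^ s / B"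
  by (simp add: power_int_diff)

lemma cv_Fq:
  assumes r0: "\<forall>w. norm w < r0 \<longrightarrow> ereal (norm w) < fps_conv_radius Qc \<and>
    (w \<noteq> 0 \<longrightarrow> eval_fps Qc w = w * exp w / (1 - exp w))"
  assumes B: "B > 0" and z: "z \<noteq> 0" and nz: "B * norm z < r0"
  shows "cv (Fq B) z (z * (exp (complex_of_real B * z) / (1 - exp (complex_of_real B * z))))"
proof -
  define u where "u = complex_of_real B * z"
  have nu: "norm u < r0" using nz B by (simp add: u_def norm_mult)
  have u0: "u \<noteq> 0" using B z by (simp add: u_def)
  from r0 nu u0 have rad: "ereal (norm u) < fps_conv_radius Qc" and ev: "eval_fps Qc u = u * exp u / (1 - exp u)"
    by auto
  have e: "fps_nth (Fq B) n * z ^ n = complex_of_real (1 / B) * (fps_nth Qc n * u ^ n)" for n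
    using B by (simp add: Fq_def powi_shift u_def power_mult_distrib field_simps)
  have "summable (\<lambda>n. norm (fps_nth Qc n * u ^ n))" by (rule norm_summable_fps) (use rad in simp)
  hence "summable (\<lambda>n. norm (complex_of_real (1 / B)) * norm (fps_nth Qc n * u ^ n))"
    by (rule summable_mult)
  hence s1: "summable (\<lambda>n. norm (fps_nth (Fq B) n * z ^ n))"
    by (simp only: e norm_mult)
  have "(\<lambda>n. fps_nth Qc n * u ^ n) sums eval_fps Qc u" by (rule sums_eval_fps) (use rad in simp)
  hence "(\<lambda>n. complex_of_real (1 / B) * (fps_nth Qc n * u ^ n)) sums (complex_of_real (1 / B) * eval_fps Qc u)"
    by (rule sums_mult)
  also have "complex_of_real (1 / B) * eval_fps Qc u = complex_of_real (1 / B) * (u * exp u / (1 - exp u))"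
    by (simp only: ev)
  also have "\<dots> = (complex_of_real (1 / B) * u) * (exp u / (1 - exp u))"
    by simp
  also have "complex_of_real (1 / B) * u = z"
    using B by (simp add: u_def)
  finally have "(\<lambda>n. complex_of_real (1 / B) * (fps_nth Qc n * u ^ n)) sums (z * (exp u / (1 - exp u)))" .
  thus ?thesis using s1 by (simp add: cv_def e u_def)
qed

lemma cv_exp: "cv (fps_exp c) z (exp (c * z))"
proof -
  have "summable (\<lambda>n. norm (fps_nth (fps_exp c) n * z ^ n))" by (rule norm_summable_fps) simp
  moreover have "(\<lambda>n. fps_nth (fps_exp c) n * z ^ n) sums exp (c * z)"
    using sums_eval_fps[of z "fps_exp c"] by simp
  ultimately show ?thesis by (simp add: cv_def)
qed



lemma Bs_pos:
  assumes "\<forall>b\<in>set \<beta>. 0 < b" "l < length \<beta>"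
  shows "0 < real (\<Sum>j\<in>{l..<length \<beta>}. \<beta> ! j)"
proof -
  have "\<beta> ! l \<le> (\<Sum>j\<in>{l..<length \<beta>}. \<beta> ! j)" by (rule member_le_sum) (use assms in auto)
  moreover have "\<beta> ! l > 0" using assms by simp
  ultimately have "0 < (\<Sum>j\<in>{l..<length \<beta>}. \<beta> ! j)" by linarith
  thus ?thesis unfolding of_nat_0_less_iff .
qed

lemma Bs_le:
  "real (\<Sum>j\<in>{l..<length \<beta>}. \<beta> ! j) \<le> real (\<Sum>j\<in>{0..<length \<beta>}. \<beta> ! j)"
proof -
  have "(\<Sum>j\<in>{l..<length \<beta>}. \<beta> ! j) \<le> (\<Sum>j\<in>{0..<length \<beta>}. \<beta> ! j)"
    by (rule sum_mono2) auto
  thus ?thesis by linarith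
qed

lemma H0_nth:
  fixes B t :: real
  assumes "B \<noteq> 0"
  shows "fps_nth (fps_exp (complex_of_real (t * B)) * Fq B) a =
    complex_of_real ((\<Sum>i=0..a. bnum (a - i) / (fact i * fact (a - i)) * t ^ i) * B powi (int a - 1))"
proof -
  have "fps_nth (fps_exp (complex_of_real (t * B)) * Fq B) a =
     (\<Sum>i=0..a. complex_of_real ((t * B) ^ i / fact i * (bnum (a - i) / fact (a - i) * B powi (int (a - i) - 1))))"
    by (simp add: fps_mult_nth Fq_nth)
  also have "\<dots> = complex_of_real (\<Sum>i=0..a. (t * B) ^ i / fact i * (bnum (a - i) / fact (a - i) * B powi (int (a - i) - 1)))"
    by simp
  also have "(\<Sum>i=0..a. (t * B) ^ i / fact i * (bnum (a - i) / fact (a - i) * B powi (int (a - i) - 1)))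
      = (\<Sum>i=0..a. bnum (a - i) / (fact i * fact (a - i)) * t ^ i * B powi (int a - 1))"
  proof (intro sum.cong refl)
    fix i assume "i \<in> {0..a}"
    hence ia: "i \<le> a" by simp
    have "B powi (int a - 1) = B powi (int i + (int (a - i) - 1))" using ia by (simp add: of_nat_diff)
    also have "\<dots> = B ^ i * B powi (int (a - i) - 1)" using assms by (simp add: power_int_add)
    finally have p: "B powi (int a - 1) = B ^ i * B powi (int (a - i) - 1)" .
    show "(t * B) ^ i / fact i * (bnum (a - i) / fact (a - i) * B powi (int (a - i) - 1))
        = bnum (a - i) / (fact i * fact (a - i)) * t ^ i * B powi (int a - 1)"
      unfolding p by (simp add: power_mult_distrib field_simps)
  qed
  finally show ?thesis by (simp add: sum_distrib_right)
qed

theorem corollary3p8: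
  fixes \<beta> :: "nat list" and t :: real
  assumes "length \<beta> \<ge> 1" and "\<forall>b\<in>set \<beta>. 0 < b" and "t \<ge> 0"
  shows "\<exists>r>0. \<forall>z::complex. Re z < 0 \<and> norm z < r \<longrightarrow>
           (\<lambda>n. complex_of_real (coef \<beta> t n) * z powi (int n - int (length \<beta>))) sums phi \<beta> t z"
proof -
  define k where "k = length \<beta>"
  define Bs where "Bs l = real (\<Sum>j\<in>{l..<k}. \<beta> ! j)" for l
  obtain k' where kk: "k = Suc k'" using assms(1) k_def by (metis One_nat_def Suc_le_D)
  obtain r0 where r0pos: "r0 > 0" and r0: "\<forall>w. norm w < r0 \<longrightarrow> ereal (norm w) < fps_conv_radius Qc \<and>
    (w \<noteq> 0 \<longrightarrow> eval_fps Qc w = w * exp w / (1 - exp w))" using Qc_exp by blast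
  have Bpos: "Bs l > 0" if "l < k" for l using Bs_pos[OF assms(2)] that by (simp add: Bs_def k_def)
  have Ble: "Bs l \<le> Bs 0" for l using Bs_le[where l=l and \<beta>=\<beta>] by (simp add: Bs_def k_def)
  have B0: "Bs 0 > 0" using Bpos[of 0] kk by simp
  define Ee where "Ee = fps_exp (complex_of_real (t * Bs 0))"
  define H where "H l = (if l = 0 then Ee * Fq (Bs 0) else Fq (Bs l))" for l
  define P where "P = (\<Prod>l<k. H l)"
  define hr where "hr l a = (if l = 0 then (\<Sum>i=0..a. bnum (a - i) / (fact i * fact (a - i)) * t ^ i) * Bs 0 powi (int a - 1)
      else bnum a / fact a * Bs l powi (int a - 1))" for l a
  have Hnth: "fps_nth (H l) a = complex_of_real (hr l a)" for l a
  proof (cases "l = 0")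
    case True
    have "fps_nth (H 0) a = complex_of_real (hr 0 a)"
      unfolding H_def hr_def Ee_def simp_thms(6) if_True by (rule H0_nth) (use B0 in simp)
    thus ?thesis using True by simp
  next
    case False
    thus ?thesis by (simp add: H_def hr_def Fq_nth)
  qed
  have Pnth: "fps_nth P n = complex_of_real (coef \<beta> t n)" for n
  proof -
    have "fps_nth P n = (\<Sum>s\<in>WC k n. \<Prod>l<k. fps_nth (H l) (s ! l))"
      unfolding P_def by (rule fps_nth_prod_WC)
    also have "\<dots> = complex_of_real (\<Sum>s\<in>WC k n. \<Prod>l<k. hr l (s ! l))"
      by (simp add: Hnth)
    also have "(\<Sum>s\<in>WC k n. \<Prod>l<k. hr l (s ! l)) = coef \<beta> t n"
      unfolding coef_def Let_def k_def[symmetric]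
    proof (intro sum.cong refl)
      fix s
      have A: "(\<Prod>l<k. hr l (s ! l)) = hr 0 (s ! 0) * (\<Prod>l<k'. hr (Suc l) (s ! Suc l))"
        unfolding kk by (rule prod.lessThan_Suc_shift)
      have B: "(\<Prod>j<k. Bs j powi (int (s ! j) - 1)) = Bs 0 powi (int (s ! 0) - 1) * (\<Prod>j<k'. Bs (Suc j) powi (int (s ! Suc j) - 1))"
        unfolding kk by (rule prod.lessThan_Suc_shift)
      have C: "(\<Prod>j\<in>{1..<k}. bnum (s ! j) / fact (s ! j)) = (\<Prod>j<k'. bnum (s ! Suc j) / fact (s ! Suc j))"
        unfolding kk using prod.atLeast_Suc_lessThan_Suc_shift[of "\<lambda>j. bnum (s ! j) / fact (s ! j)" 0 k']
        by (simp add: atLeast0LessThan)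
      have "(\<Prod>l<k. hr l (s ! l)) = (\<Sum>i=0..s!0. bnum (s!0 - i) / (fact i * fact (s!0 - i)) * t ^ i)
           * (\<Prod>j\<in>{1..<k}. bnum (s ! j) / fact (s ! j)) * (\<Prod>j<k. Bs j powi (int (s ! j) - 1))"
      proof -
        have D: "(\<Prod>l<k'. hr (Suc l) (s ! Suc l)) = (\<Prod>j<k'. bnum (s ! Suc j) / fact (s ! Suc j)) * (\<Prod>j<k'. Bs (Suc j) powi (int (s ! Suc j) - 1))"
          by (simp add: hr_def prod.distrib[symmetric])
        show ?thesis unfolding A B C D by (simp add: hr_def ac_simps)
      qed
      thus "(\<Prod>l<k. hr l (s ! l)) = (\<Sum>i=0..s!0. bnum (s!0 - i) / (fact i * fact (s!0 - i)) * t ^ i)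
           * (\<Prod>j\<in>{1..<k}. bnum (s ! j) / fact (s ! j)) * (\<Prod>j<k. real (\<Sum>l\<in>{j..<k}. \<beta> ! l) powi (int (s ! j) - 1))"
        by (simp add: Bs_def)
    qed
    finally show ?thesis .
  qed
  show ?thesis
  proof (intro exI[of _ "r0 / Bs 0"] conjI allI impI)
    show "r0 / Bs 0 > 0" using r0pos B0 by simp
  next
    fix z :: complex assume zz: "Re z < 0 \<and> norm z < r0 / Bs 0"
    have z0: "z \<noteq> 0" using zz by auto
    have nzl: "Bs l * norm z < r0" for l
    proof -
      have "Bs l * norm z \<le> Bs 0 * norm z" using Ble[of l] by (simp add: mult_right_mono)
      also have "\<dots> < r0" using zz B0 by (simp add: field_simps)
      finally show ?thesis .
    qed
    define q where "q l = exp (complex_of_real (Bs l) * z) / (1 - exp (complex_of_real (Bs l) * z))" for l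
    define v where "v l = (if l = 0 then exp (complex_of_real (t * Bs 0) * z) * (z * q 0) else z * q l)" for l
    have cvH: "cv (H l) z (v l)" if "l < k" for l
    proof (cases "l = 0")
      case True
      show ?thesis unfolding True H_def v_def Ee_def q_def
        using cv_mult[OF cv_exp cv_Fq[OF r0 B0 z0 nzl]] by simp
    next
      case False
      show ?thesis unfolding H_def v_def q_def using False cv_Fq[OF r0 Bpos[OF that] z0 nzl] by simp
    qed
    have cvP: "cv P z (\<Prod>l<k. v l)" unfolding P_def by (rule cv_prod) (rule cvH)
    have phi_eq: "phi \<beta> t z = exp (complex_of_real (t * Bs 0) * z) * (\<Prod>l<k. q l)"
      using phi_closed[OF assms(2), of z t] zz by (simp add: q_def Bs_def k_def)
    have pv: "(\<Prod>l<k. v l) = z ^ k * phi \<beta> t z"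
    proof -
      have "(\<Prod>l<k. v l) = v 0 * (\<Prod>l<k'. v (Suc l))" unfolding kk by (rule prod.lessThan_Suc_shift)
      also have "\<dots> = exp (complex_of_real (t * Bs 0) * z) * (z * q 0) * (\<Prod>l<k'. z * q (Suc l))"
        by (simp add: v_def)
      also have "\<dots> = z ^ k * (exp (complex_of_real (t * Bs 0) * z) * (q 0 * (\<Prod>l<k'. q (Suc l))))"
        by (simp add: prod.distrib kk)
      also have "q 0 * (\<Prod>l<k'. q (Suc l)) = (\<Prod>l<k. q l)" unfolding kk by (rule prod.lessThan_Suc_shift[symmetric])
      finally show ?thesis by (simp add: phi_eq)
    qed
    from cvP have "(\<lambda>n. fps_nth P n * z ^ n) sums (z ^ k * phi \<beta> t z)" by (simp add: cv_def pv)
    hence S: "(\<lambda>n. z powi (- int k) * (fps_nth P n * z ^ n)) sums (z powi (- int k) * (z ^ k * phi \<beta> t z))"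
      by (rule sums_mult)
    have E1: "z powi (- int k) * (z ^ k * phi \<beta> t z) = phi \<beta> t z"
      using z0 by (simp add: power_int_minus field_simps)
    have E2: "z powi (- int k) * (fps_nth P n * z ^ n) = complex_of_real (coef \<beta> t n) * z powi (int n - int k)" for n
    proof -
      have "z powi (int n - int k) = z powi (int n) * z powi (- int k)"
        using z0 power_int_add[of z "int n" "- int k"] by simp
      thus ?thesis by (simp add: Pnth)
    qed
    from S have "(\<lambda>n. complex_of_real (coef \<beta> t n) * z powi (int n - int k)) sums phi \<beta> t z"
      unfolding E1 E2 .
    thus "(\<lambda>n. complex_of_real (coef \<beta> t n) * z powi (int n - int (length \<beta>))) sums phi \<beta> t z"
      by (simp add: k_def)
  qed
qed


end
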